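(* Let $G$ be a $2$-permutable graph. Then $\chi_i(G\,\square\,K_2)=\Delta(G\,\square\,K_2)+1$.
   Context: All graphs are finite and simple. $K^-_{2n}$ is the complete graph on $2n$ vertices with a perfect matching removed. A homomorphism $f:G\to H$ is a map $V(G)\to V(H)$ with $f(u)f(v)\in E(H)$ whenever $uv\in E(G)$; it is locally injective if for every vertex $v$, $f$ is injective on $N(v)$. A connected $2d$-regular graph $G$ is $2$-permutable if it admits a locally injective homomorphism to $K^-_{2d+2}$. An incidence of $G$ is a pair $(v,e)$ with $v\in e\in E(G)$; incidences $(v,e),(u,f)$ are adjacent if $v=u$, or $e=f$, or $vu\in\{e,f\}$; an incidence coloring gives adjacent incidences distinct colors; $\chi_i(G)$ is the least number of colors of an incidence coloring. $\Delta$ denotes maximum degree. $G\,\square\,H$ is the Cartesian product: vertex set $V(G)\times V(H)$, $(u,v)\sim(u',v')$ iff ($uu'\in E(G)$, $v=v'$) or ($u=u'$, $vv'\in E(H)$). *)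

theory Defs
  imports Main
begin

definition simple_graph :: "'a set \<Rightarrow> 'a set set \<Rightarrow> bool" where
  "simple_graph V E \<longleftrightarrow> finite V \<and> (\<forall>e\<in>E. e \<subseteq> V \<and> card e = 2)"

definition nbhd :: "'a set \<Rightarrow> 'a set set \<Rightarrow> 'a \<Rightarrow> 'a set" where
  "nbhd V E v = {u \<in> V. {u, v} \<in> E}"

definition degree :: "'a set \<Rightarrow> 'a set set \<Rightarrow> 'a \<Rightarrow> nat" where
  "degree V E v = card (nbhd V E v)"

definition max_degree :: "'a set \<Rightarrow> 'a set set \<Rightarrow> nat" where
  "max_degree V E = Max (degree V E ` V)"

definition regular :: "'a set \<Rightarrow> 'a set set \<Rightarrow> nat \<Rightarrow> bool" where
  "regular V E k \<longleftrightarrow> (\<forall>v\<in>V. degree V E v = k)"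

definition connected_graph :: "'a set \<Rightarrow> 'a set set \<Rightarrow> bool" where
  "connected_graph V E \<longleftrightarrow> V \<noteq> {} \<and>
     (\<forall>u\<in>V. \<forall>v\<in>V. (u, v) \<in> {(x, y). {x, y} \<in> E}\<^sup>*)"

definition graph_hom :: "'a set \<Rightarrow> 'a set set \<Rightarrow> 'b set \<Rightarrow> 'b set set \<Rightarrow> ('a \<Rightarrow> 'b) \<Rightarrow> bool" where
  "graph_hom V E W F f \<longleftrightarrow> f ` V \<subseteq> W \<and> (\<forall>u\<in>V. \<forall>v\<in>V. {u, v} \<in> E \<longrightarrow> {f u, f v} \<in> F)"

definition locally_injective_hom ::
  "'a set \<Rightarrow> 'a set set \<Rightarrow> 'b set \<Rightarrow> 'b set set \<Rightarrow> ('a \<Rightarrow> 'b) \<Rightarrow> bool" where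
  "locally_injective_hom V E W F f \<longleftrightarrow>
     graph_hom V E W F f \<and> (\<forall>v\<in>V. inj_on f (nbhd V E v))"

text \<open>K^-_{2n}: vertices 0..2n-1, perfect matching {2k,2k+1} removed.\<close>
definition K_minus_V :: "nat \<Rightarrow> nat set" where
  "K_minus_V n = {..<2 * n}"

definition K_minus_E :: "nat \<Rightarrow> nat set set" where
  "K_minus_E n = {{i, j} | i j. i < 2 * n \<and> j < 2 * n \<and> i \<noteq> j \<and> i div 2 \<noteq> j div 2}"

definition two_permutable :: "'a set \<Rightarrow> 'a set set \<Rightarrow> bool" where
  "two_permutable V E \<longleftrightarrow> connected_graph V E \<and>
     (\<exists>d. regular V E (2 * d) \<and>
          (\<exists>f. locally_injective_hom V E (K_minus_V (d + 1)) (K_minus_E (d + 1)) f))"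

definition incidences :: "'a set set \<Rightarrow> ('a \<times> 'a set) set" where
  "incidences E = {(v, e). e \<in> E \<and> v \<in> e}"

definition inc_adj :: "'a \<times> 'a set \<Rightarrow> 'a \<times> 'a set \<Rightarrow> bool" where
  "inc_adj i j \<longleftrightarrow> (case i of (v, e) \<Rightarrow> case j of (u, f) \<Rightarrow>
      v = u \<or> e = f \<or> {v, u} = e \<or> {v, u} = f)"

definition incidence_coloring :: "'a set set \<Rightarrow> ('a \<times> 'a set \<Rightarrow> nat) \<Rightarrow> nat \<Rightarrow> bool" where
  "incidence_coloring E c k \<longleftrightarrow>
     c ` incidences E \<subseteq> {..<k} \<and>
     (\<forall>i\<in>incidences E. \<forall>j\<in>incidences E. i \<noteq> j \<and> inc_adj i j \<longrightarrow> c i \<noteq> c j)"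

definition incidence_chromatic :: "'a set set \<Rightarrow> nat" where
  "incidence_chromatic E = (LEAST k. \<exists>c. incidence_coloring E c k)"

definition box_V :: "'a set \<Rightarrow> 'b set \<Rightarrow> ('a \<times> 'b) set" where
  "box_V V1 V2 = V1 \<times> V2"

definition box_E :: "'a set \<Rightarrow> 'a set set \<Rightarrow> 'b set \<Rightarrow> 'b set set \<Rightarrow> ('a \<times> 'b) set set" where
  "box_E V1 E1 V2 E2 =
     {{(u, v), (u', v)} | u u' v. {u, u'} \<in> E1 \<and> v \<in> V2} \<union>
     {{(u, v), (u, v')} | u v v'. u \<in> V1 \<and> {v, v'} \<in> E2}"

definition K2_V :: "nat set" where "K2_V = {0, 1}"
definition K2_E :: "nat set set" where "K2_E = {{0, 1}}"

end

theory Submission imports Defs begin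

lemma edge_form:
  assumes sg: "simple_graph V E" and e: "e \<in> E" and v: "v \<in> e"
  shows "\<exists>u. e = {v,u} \<and> u \<noteq> v \<and> u \<in> V \<and> v \<in> V"
proof -
  have "e \<subseteq> V" "card e = 2" using sg e by (auto simp: simple_graph_def)
  then obtain a b where ab: "e = {a,b}" "a \<noteq> b" by (auto simp: card_2_iff)
  show ?thesis
  proof (cases "v = a")
    case True then show ?thesis using ab `e \<subseteq> V` by auto
  next
    case False then have "v = b" using v ab by auto
    then show ?thesis using ab `e \<subseteq> V` by (auto simp: insert_commute)
  qed
qed

lemma no_loop:
  assumes sg: "simple_graph V E" shows "{v,v} \<notin> E"
  using sg by (auto simp: simple_graph_def)

lemma inc_lower:
  assumes sg: "simple_graph V E" and x: "x \<in> V" and y: "y \<in> nbhd V E x"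
    and col: "incidence_coloring E c k"
  shows "degree V E x + 1 \<le> k"
proof -
  let ?N = "nbhd V E x"
  let ?S = "(\<lambda>u. (x, {x,u})) ` ?N \<union> {(y, {x,y})}"
  have fin: "finite ?N" using sg by (auto simp: simple_graph_def nbhd_def)
  have inE: "\<And>u. u \<in> ?N \<Longrightarrow> {x,u} \<in> E" by (auto simp: nbhd_def insert_commute)
  have ne: "\<And>u. u \<in> ?N \<Longrightarrow> u \<noteq> x" using no_loop[OF sg] by (auto simp: nbhd_def)
  have sub: "?S \<subseteq> incidences E" using inE y by (auto simp: incidences_def)
  have injN: "inj_on (\<lambda>u. (x, {x,u})) ?N"
    by (rule inj_onI) (use ne in \<open>auto simp: doubleton_eq_iff\<close>)
  have yn: "(y, {x,y}) \<notin> (\<lambda>u. (x, {x,u})) ` ?N" using ne[OF y] by auto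
  have cardS: "card ?S = degree V E x + 1"
    using yn fin card_image[OF injN] by (simp add: degree_def)
  have adj: "\<forall>a\<in>?S. \<forall>b\<in>?S. inc_adj a b" by (auto simp: inc_adj_def insert_commute)
  have inj: "inj_on c ?S"
  proof (rule inj_onI)
    fix a b assume "a \<in> ?S" "b \<in> ?S" "c a = c b"
    show "a = b"
    proof (rule ccontr)
      assume ne: "a \<noteq> b"
      have ia: "inc_adj a b" using adj `a \<in> ?S` `b \<in> ?S` by blast
      have mem: "a \<in> incidences E" "b \<in> incidences E" using sub `a \<in> ?S` `b \<in> ?S` by blast+
      have col2: "\<forall>i\<in>incidences E. \<forall>j\<in>incidences E. i \<noteq> j \<and> inc_adj i j \<longrightarrow> c i \<noteq> c j"
        using col unfolding incidence_coloring_def by (rule conjunct2)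
      have "c a \<noteq> c b" using col2 mem ne ia by blast
      then show False using `c a = c b` by simp
    qed
  qed
  have "c ` ?S \<subseteq> {..<k}" using col sub unfolding incidence_coloring_def by blast
  then have "card (c ` ?S) \<le> k" by (metis card_lessThan card_mono finite_lessThan)
  then show ?thesis using card_image[OF inj] cardS by simp
qed

lemma inc_upper:
  assumes sg: "simple_graph V E" and gk: "g ` V \<subseteq> {..<k}"
    and prp: "\<And>u v. u\<in>V \<Longrightarrow> v\<in>V \<Longrightarrow> {u,v}\<in>E \<Longrightarrow> g u \<noteq> g v"
    and li: "\<And>v. v\<in>V \<Longrightarrow> inj_on g (nbhd V E v)"
  shows "incidence_coloring E (\<lambda>(x,e). g (the_elem (e - {x}))) k"
  unfolding incidence_coloring_def
proof (intro conjI ballI impI)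
  have col: "\<And>v u. u \<noteq> v \<Longrightarrow> (\<lambda>(x,e). g (the_elem (e - {x}))) (v, {v,u}) = g u"
    by auto
  show "(\<lambda>(x,e). g (the_elem (e - {x}))) ` incidences E \<subseteq> {..<k}"
  proof
    fix z assume "z \<in> (\<lambda>(x,e). g (the_elem (e - {x}))) ` incidences E"
    then obtain v e where "e \<in> E" "v \<in> e" "z = (\<lambda>(x,e). g (the_elem (e - {x}))) (v,e)"
      by (auto simp: incidences_def)
    then show "z \<in> {..<k}" using edge_form[OF sg] col gk by blast
  qed
  fix i j assume i: "i \<in> incidences E" and j: "j \<in> incidences E" and ij: "i \<noteq> j \<and> inc_adj i j"
  obtain v e where ve: "i = (v,e)" "e \<in> E" "v \<in> e" using i by (auto simp: incidences_def)
  obtain u where u: "e = {v,u}" "u \<noteq> v" "u \<in> V" "v \<in> V" using edge_form[OF sg ve(2,3)] by blast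
  obtain w e' where we: "j = (w,e')" "e' \<in> E" "w \<in> e'" using j by (auto simp: incidences_def)
  obtain z where z: "e' = {w,z}" "z \<noteq> w" "z \<in> V" "w \<in> V" using edge_form[OF sg we(2,3)] by blast
  have ci: "(\<lambda>(x,e). g (the_elem (e - {x}))) i = g u" using ve u col by simp
  have cj: "(\<lambda>(x,e). g (the_elem (e - {x}))) j = g z" using we z col by simp
  have E1: "{v,u} \<in> E" "{w,z} \<in> E" using u ve z we by auto
  have adj: "v = w \<or> {v,u} = {w,z} \<or> {v,w} = {v,u} \<or> {v,w} = {w,z}"
    using ij ve we u z by (simp add: inc_adj_def)
  have "g u \<noteq> g z"
  proof (cases "v = w")
    case True
    then have "u \<noteq> z" using ij ve we u z by auto
    moreover have "u \<in> nbhd V E v" "z \<in> nbhd V E v" using E1 u z True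
      by (auto simp: nbhd_def insert_commute)
    ultimately show ?thesis using li[OF u(4)] by (auto dest: inj_onD)
  next
    case False
    then consider "{v,u} = {w,z}" | "{v,w} = {v,u}" | "{v,w} = {w,z}" using adj by blast
    then show ?thesis
    proof cases
      case 1 then have "w = u" "z = v" using False by (auto simp: doubleton_eq_iff)
      then show ?thesis using prp u E1 by auto
    next
      case 2 then have "w = u" using False by (auto simp: doubleton_eq_iff)
      then show ?thesis using prp z E1 by auto
    next
      case 3 then have "z = v" using False by (auto simp: doubleton_eq_iff)
      then show ?thesis using prp u E1 by (metis insert_commute)
    qed
  qed
  then show "(\<lambda>(x,e). g (the_elem (e - {x}))) i \<noteq> (\<lambda>(x,e). g (the_elem (e - {x}))) j"
    using ci cj by simp
qed

lemma boxE_cases: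
  assumes "X \<in> box_E V E K2_V K2_E"
  obtains (a) a a' b where "X = {(a,b),(a',b)}" "{a,a'} \<in> E" "b \<in> {0,1::nat}"
    | (b) a b b' where "X = {(a,b),(a,b')}" "a \<in> V" "{b,b'} = {0::nat,1}"
proof -
  have "(\<exists>a a' b. X = {(a,b),(a',b)} \<and> {a,a'} \<in> E \<and> b \<in> K2_V) \<or>
        (\<exists>a b b'. X = {(a,b),(a,b')} \<and> a \<in> V \<and> {b,b'} \<in> K2_E)"
    using assms unfolding box_E_def Un_iff mem_Collect_eq .
  then show thesis using that unfolding K2_V_def K2_E_def by blast
qed

lemma boxF_iff:
  assumes sg: "simple_graph V E"
  shows "{(v,i),(u,j)} \<in> box_E V E K2_V K2_E \<longleftrightarrow>
     (i = j \<and> {v,u} \<in> E \<and> i \<in> {0,1}) \<or> (v = u \<and> v \<in> V \<and> i \<in> {0,1} \<and> j \<in> {0,1} \<and> i \<noteq> j)"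
    (is "?L \<longleftrightarrow> ?R")
proof
  assume ?L
  then show ?R
  proof (cases rule: boxE_cases)
    case (a a a' b)
    then have "((v,i)=(a,b) \<and> (u,j)=(a',b)) \<or> ((v,i)=(a',b) \<and> (u,j)=(a,b))"
      by (simp add: doubleton_eq_iff)
    then show ?thesis using a by (metis Pair_inject insert_commute)
  next
    case (b a b b')
    then have "((v,i)=(a,b) \<and> (u,j)=(a,b')) \<or> ((v,i)=(a,b') \<and> (u,j)=(a,b))"
      by (simp add: doubleton_eq_iff)
    moreover have "b \<noteq> b'" "b \<in> {0,1}" "b' \<in> {0,1}" using b(3) by (auto simp: doubleton_eq_iff)
    ultimately show ?thesis using b by auto
  qed
next
  assume ?R
  then show ?L
  proof
    assume h: "i = j \<and> {v,u} \<in> E \<and> i \<in> {0,1}"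
    then have "{(v,i),(u,j)} \<in> {{(a,b),(a',b)} | a a' b. {a,a'}\<in>E \<and> b \<in> K2_V}"
      unfolding K2_V_def by blast
    then show ?thesis unfolding box_E_def by blast
  next
    assume h: "v = u \<and> v \<in> V \<and> i \<in> {0,1} \<and> j \<in> {0,1} \<and> i \<noteq> j"
    then have "{i,j} = {0::nat,1}" by auto
    then have "{(v,i),(u,j)} \<in> {{(a,b),(a,b')} | a b b'. a\<in>V \<and> {b,b'} \<in> K2_E}"
      unfolding K2_E_def using h by blast
    then show ?thesis unfolding box_E_def by blast
  qed
qed

definition partner :: "nat \<Rightarrow> nat" where
  "partner n = (if even n then n + 1 else n - 1)"

lemma partner_div: "partner n div 2 = n div 2"
  unfolding partner_def by (auto elim!: evenE oddE)

lemma partner_ne: "partner n \<noteq> n"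
  unfolding partner_def by (cases "even n") (auto elim!: oddE)

lemma partner_partner: "partner (partner n) = n"
  unfolding partner_def by (auto elim!: evenE oddE)

lemma partner_inj: "partner a = partner b \<Longrightarrow> a = b"
  by (metis partner_partner)

lemma partner_lt: "n < 2 * m \<Longrightarrow> partner n < 2 * m"
  unfolding partner_def by (auto elim!: evenE oddE)

definition gcol :: "('a \<Rightarrow> nat) \<Rightarrow> 'a \<times> nat \<Rightarrow> nat" where
  "gcol f = (\<lambda>(v,i). if i = 0 then f v else partner (f v))"

lemma gcol_div: "gcol f (v,i) div 2 = f v div 2"
  by (simp add: gcol_def partner_div)

lemma nbhd_box:
  assumes sg: "simple_graph V E" and v: "v \<in> V" and i: "i \<in> {0,1::nat}"
  shows "nbhd (box_V V K2_V) (box_E V E K2_V K2_E) (v,i) = (\<lambda>u. (u,i)) ` nbhd V E v \<union> {(v,1-i)}"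
proof -
  have sub: "\<And>u. {u,v} \<in> E \<Longrightarrow> u \<in> V" using sg by (auto simp: simple_graph_def)
  show ?thesis
  proof (rule set_eqI)
    fix x :: "'a \<times> nat"
    obtain u j where x: "x = (u,j)" by (cases x)
    have W: "(u,j) \<in> box_V V K2_V \<longleftrightarrow> u \<in> V \<and> j \<in> {0,1}"
      by (simp add: box_V_def K2_V_def)
    show "x \<in> nbhd (box_V V K2_V) (box_E V E K2_V K2_E) (v,i) \<longleftrightarrow> x \<in> (\<lambda>u. (u,i)) ` nbhd V E v \<union> {(v,1-i)}"
      unfolding x nbhd_def mem_Collect_eq W boxF_iff[OF sg]
      using i v sub by auto
  qed
qed

lemma inj_Un_img:
  assumes "\<And>u w. u \<in> N \<Longrightarrow> w \<in> N \<Longrightarrow> g (u,i) = g (w,i) \<Longrightarrow> u = w"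
    and "\<And>u. u \<in> N \<Longrightarrow> g (u,i) \<noteq> g z"
  shows "inj_on g ((\<lambda>u. (u,i)) ` N \<union> {z})"
proof (rule inj_onI)
  fix a b assume a: "a \<in> (\<lambda>u. (u,i)) ` N \<union> {z}" and b: "b \<in> (\<lambda>u. (u,i)) ` N \<union> {z}"
    and ab: "g a = g b"
  from a consider (1) u where "u \<in> N" "a = (u,i)" | (2) "a = z" by blast
  then show "a = b"
  proof cases
    case 1
    from b consider (1) w where "w \<in> N" "b = (w,i)" | (2) "b = z" by blast
    then show ?thesis
    proof cases
      case 11: 1 then show ?thesis using 1 ab assms(1) by metis
    next
      case 2 then show ?thesis using 1 ab assms(2) by metis
    qed
  next
    case 2
    from b consider (1) w where "w \<in> N" "b = (w,i)" | (2) "b = z" by blast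
    then show ?thesis
    proof cases
      case 1 then show ?thesis using 2 ab assms(2) by metis
    next
      case 22: 2 then show ?thesis using 2 by simp
    qed
  qed
qed

theorem mainTheorem7:
  fixes V :: "'a set" and E :: "'a set set"
  assumes "simple_graph V E"
    and "two_permutable V E"
  shows "incidence_chromatic (box_E V E K2_V K2_E)
           = max_degree (box_V V K2_V) (box_E V E K2_V K2_E) + 1"
proof -
  note sg = assms(1)
  obtain d f where conn: "connected_graph V E" and reg: "regular V E (2*d)"
    and lih: "locally_injective_hom V E (K_minus_V (d + 1)) (K_minus_E (d + 1)) f"
    using assms(2) unfolding two_permutable_def by blast
  define W where "W = box_V V K2_V"
  define F where "F = box_E V E K2_V K2_E"
  define g where "g = gcol f"
  have finV: "finite V" using sg by (simp add: simple_graph_def)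
  obtain v0 where v0: "v0 \<in> V" using conn unfolding connected_graph_def by blast
  have fV: "\<And>v. v \<in> V \<Longrightarrow> f v < 2*(d+1)"
    using lih unfolding locally_injective_hom_def graph_hom_def K_minus_V_def by auto
  have fE: "\<And>u v. u \<in> V \<Longrightarrow> v \<in> V \<Longrightarrow> {u,v} \<in> E \<Longrightarrow> f u div 2 \<noteq> f v div 2"
  proof -
    fix u v assume "u \<in> V" "v \<in> V" "{u,v} \<in> E"
    then have "{f u, f v} \<in> K_minus_E (d+1)"
      using lih unfolding locally_injective_hom_def graph_hom_def by blast
    then obtain a b where "{f u, f v} = {a,b}" "a div 2 \<noteq> b div 2"
      unfolding K_minus_E_def by blast
    then show "f u div 2 \<noteq> f v div 2" by (auto simp: doubleton_eq_iff)
  qed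
  have finj: "\<And>v. v \<in> V \<Longrightarrow> inj_on f (nbhd V E v)"
    using lih unfolding locally_injective_hom_def by blast
  have degV: "\<And>v. v \<in> V \<Longrightarrow> card (nbhd V E v) = 2*d"
    using reg unfolding regular_def degree_def by blast
  have finN: "\<And>v. finite (nbhd V E v)" using finV by (simp add: nbhd_def)
  have Wm: "\<And>u j. (u,j) \<in> W \<longleftrightarrow> u \<in> V \<and> j \<in> {0,1}"
    by (simp add: W_def box_V_def K2_V_def)
  have nb: "\<And>v i. v \<in> V \<Longrightarrow> i \<in> {0,1::nat} \<Longrightarrow>
      nbhd W F (v,i) = (\<lambda>u. (u,i)) ` nbhd V E v \<union> {(v,1-i)}"
    unfolding W_def F_def by (rule nbhd_box[OF sg])
  have nloop: "\<And>v. v \<notin> nbhd V E v" using no_loop[OF sg] by (simp add: nbhd_def)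
  have degW: "\<And>x. x \<in> W \<Longrightarrow> degree W F x = 2*d+1"
  proof -
    fix x assume "x \<in> W"
    then obtain v i where x: "x = (v,i)" "v \<in> V" "i \<in> {0,1::nat}" using Wm by (cases x) blast
    have inj: "inj_on (\<lambda>u. (u,i)) (nbhd V E v)" by (rule inj_onI) auto
    have "(v,1-i) \<notin> (\<lambda>u. (u,i)) ` nbhd V E v" using nloop by auto
    then show "degree W F x = 2*d+1"
      unfolding degree_def x(1) nb[OF x(2,3)]
      using card_image[OF inj] degV[OF x(2)] finN by simp
  qed
  have Wne: "W \<noteq> {}" using v0 Wm by blast
  have maxd: "max_degree W F = 2*d+1"
  proof -
    have "degree W F ` W = {2*d+1}" using degW Wne by auto
    then show ?thesis unfolding max_degree_def by simp
  qed
  have sgW: "simple_graph W F"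
    unfolding simple_graph_def
  proof (rule conjI[OF _ ballI])
    show "finite W" unfolding W_def box_V_def by (rule finite_SigmaI[OF finV]) (simp add: K2_V_def)
    fix e assume "e \<in> F"
    then have "e \<in> box_E V E K2_V K2_E" by (simp add: F_def)
    then show "e \<subseteq> W \<and> card e = 2"
    proof (cases rule: boxE_cases)
      case (a a a' b)
      then have "a \<noteq> a'" "a \<in> V" "a' \<in> V" using no_loop[OF sg, of a] sg
        by (auto simp: simple_graph_def)
      then show ?thesis using a Wm by auto
    next
      case (b a b b')
      then have "b \<noteq> b'" "b \<in> {0,1}" "b' \<in> {0,1}" by (auto simp: doubleton_eq_iff)
      then show ?thesis using b Wm by auto
    qed
  qed
  have gk: "g ` W \<subseteq> {..<2*d+2}"
  proof
    fix z assume "z \<in> g ` W"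
    then obtain x where x: "x \<in> W" "z = g x" by blast
    obtain v i where vi: "x = (v,i)" by (cases x)
    have "v \<in> V" using x vi Wm by simp
    then have a: "f v < 2*(d+1)" using fV by blast
    then have b: "partner (f v) < 2*(d+1)" by (rule partner_lt)
    show "z \<in> {..<2*d+2}" using a b x vi by (simp add: g_def gcol_def)
  qed
  have gprop: "\<And>x y. x \<in> W \<Longrightarrow> y \<in> W \<Longrightarrow> {x,y} \<in> F \<Longrightarrow> g x \<noteq> g y"
  proof -
    fix x y assume "x \<in> W" "y \<in> W" "{x,y} \<in> F"
    obtain v i where x: "x = (v,i)" by (cases x)
    obtain u j where y: "y = (u,j)" by (cases y)
    have xy: "x = (v,i)" "y = (u,j)" "v \<in> V" "u \<in> V" "i \<in> {0,1::nat}" "j \<in> {0,1::nat}"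
      using x y `x \<in> W` `y \<in> W` Wm by auto
    have "(i = j \<and> {v,u} \<in> E) \<or> (v = u \<and> i \<noteq> j)"
      using `{x,y} \<in> F` unfolding xy F_def boxF_iff[OF sg] by blast
    then show "g x \<noteq> g y"
    proof
      assume h: "i = j \<and> {v,u} \<in> E"
      then have "f v div 2 \<noteq> f u div 2" using fE xy by blast
      then show ?thesis unfolding xy g_def by (metis gcol_div)
    next
      assume h: "v = u \<and> i \<noteq> j"
      then show ?thesis unfolding xy g_def gcol_def using xy partner_ne[of "f v"]
        by auto
    qed
  qed
  have gli: "\<And>x. x \<in> W \<Longrightarrow> inj_on g (nbhd W F x)"
  proof -
    fix x assume "x \<in> W"
    obtain v i where x0: "x = (v,i)" by (cases x)
    have x: "x = (v,i)" "v \<in> V" "i \<in> {0,1::nat}" using x0 `x \<in> W` Wm by auto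
    show "inj_on g (nbhd W F x)"
      unfolding x(1) nb[OF x(2,3)]
    proof (rule inj_Un_img)
      show key: "\<And>u w. u \<in> nbhd V E v \<Longrightarrow> w \<in> nbhd V E v \<Longrightarrow> g (u,i) = g (w,i) \<Longrightarrow> u = w"
      proof -
        fix u w assume uw: "u \<in> nbhd V E v" "w \<in> nbhd V E v" "g (u,i) = g (w,i)"
        then have "f u = f w" by (auto simp: g_def gcol_def split: if_splits dest: partner_inj)
        then show "u = w" using finj[OF x(2)] uw by (auto dest: inj_onD)
      qed
      show key2: "\<And>u. u \<in> nbhd V E v \<Longrightarrow> g (u,i) \<noteq> g (v,1-i)"
      proof -
        fix u assume u: "u \<in> nbhd V E v"
        then have "u \<in> V" "{u,v} \<in> E" by (auto simp: nbhd_def)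
        then have "f u div 2 \<noteq> f v div 2" using fE x(2) by blast
        then show "g (u,i) \<noteq> g (v,1-i)" unfolding g_def by (metis gcol_div)
      qed
    qed
  qed
  have col: "incidence_coloring F (\<lambda>(x,e). g (the_elem (e - {x}))) (2*d+2)"
    by (rule inc_upper[OF sgW gk gprop gli])
  have low: "\<And>c k. incidence_coloring F c k \<Longrightarrow> 2*d+2 \<le> k"
  proof -
    fix c k assume ck: "incidence_coloring F c k"
    have x0: "(v0,0) \<in> W" using v0 Wm by blast
    have y0: "(v0,1) \<in> nbhd W F (v0,0)" using nb[OF v0, of 0] by simp
    have "degree W F (v0,0) + 1 \<le> k" by (rule inc_lower[OF sgW x0 y0 ck])
    then show "2*d+2 \<le> k" using degW[OF x0] by simp
  qed
  have "incidence_chromatic F = 2*d+2"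
    unfolding incidence_chromatic_def
  proof (rule Least_equality)
    show "\<exists>c. incidence_coloring F c (2*d+2)" using col by blast
  next
    fix k assume "\<exists>c. incidence_coloring F c k"
    then show "2*d+2 \<le> k" using low by blast
  qed
  then show ?thesis using maxd unfolding W_def F_def by simp
qed

end
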